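(* For every pairwise spanner instance on a directed graph with uniform edge lengths and $k$ terminal pairs, there exists a junction tree solution whose cost is $O(\sqrt{k})\cdot\mathsf{OPT}$.
   Context: Pairwise spanner problem: given a directed graph $G=(V,E)$ with $\ell(e)=1$ for all $e$, terminal pairs $(s_i,t_i)$, $i\in[k]$, and target distances $d_i$ with $d_G(s_i,t_i)\le d_i$, find $F\subseteq E$ of minimum cardinality such that $(V,F)$ contains an $s_i\leadsto t_i$ path with at most $d_i$ edges for every $i$; $\mathsf{OPT}$ is this minimum. A junction tree rooted at $r\in V$ is a subgraph $J$ of $G$ that is the union of an in-arborescence $A^{in}$ rooted at $r$ and an out-arborescence $A^{out}$ rooted at $r$. A terminal pair $(s_i,t_i)$ is connected by $J$ if $s_i\in A^{in}$, $t_i\in A^{out}$, and the $s_i\leadsto r$ path in $A^{in}$ plus the $r\leadsto t_i$ path in $A^{out}$ have at most $d_i$ edges in total. A junction tree solution is a finite collection of junction trees (possibly with different roots) such that every terminal pair is connected by at least one of them; its cost is $\sum_J|E(J)|$, i.e., edges belonging to several junction trees are counted with multiplicity. *)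

theory Defs
  imports Complex_Main
begin

text \<open>All edges have length 1,
 so "a u-v path with at most n edges in F" is (u,v) in F^^j for some j \<le> n
 (a walk with \<le> n edges contains a path with \<le> n edges).\<close>

definition walk_within :: "('a \<times> 'a) set \<Rightarrow> nat \<Rightarrow> 'a \<Rightarrow> 'a \<Rightarrow> bool" where
  "walk_within F n u v \<longleftrightarrow> (\<exists>j\<le>n. (u, v) \<in> F ^^ j)"

definition arb_verts :: "'a \<Rightarrow> ('a \<times> 'a) set \<Rightarrow> 'a set" where
  "arb_verts r T = {r} \<union> fst ` T \<union> snd ` T"

definition out_arb :: "'a \<Rightarrow> ('a \<times> 'a) set \<Rightarrow> bool" where
  "out_arb r T \<longleftrightarrow> finite T \<and> (\<forall>u. (u, r) \<notin> T)
     \<and> (\<forall>v \<in> arb_verts r T. v \<noteq> r \<longrightarrow> (\<exists>!u. (u, v) \<in> T))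
     \<and> (\<forall>v \<in> arb_verts r T. (r, v) \<in> T\<^sup>*)"

definition in_arb :: "'a \<Rightarrow> ('a \<times> 'a) set \<Rightarrow> bool" where
  "in_arb r T \<longleftrightarrow> out_arb r (T\<inverse>)"

definition junction_tree :: "('a \<times> 'a) set \<Rightarrow> 'a \<times> ('a \<times> 'a) set \<times> ('a \<times> 'a) set \<Rightarrow> bool" where
  "junction_tree E J = (case J of (r, Ain, Aout) \<Rightarrow>
     Ain \<subseteq> E \<and> Aout \<subseteq> E \<and> in_arb r Ain \<and> out_arb r Aout)"

text \<open>Paths in arborescences are unique, so the existence of walks of lengths a, b with
 a + b \<le> d expresses that the tree path lengths sum to at most d.\<close>
definition jt_connects :: "'a \<times> ('a \<times> 'a) set \<times> ('a \<times> 'a) set \<Rightarrow> 'a \<Rightarrow> 'a \<Rightarrow> nat \<Rightarrow> bool" where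
  "jt_connects J s t d = (case J of (r, Ain, Aout) \<Rightarrow>
     s \<in> arb_verts r Ain \<and> t \<in> arb_verts r Aout \<and>
     (\<exists>a b. a + b \<le> d \<and> (s, r) \<in> Ain ^^ a \<and> (r, t) \<in> Aout ^^ b))"

definition jt_cost :: "'a \<times> ('a \<times> 'a) set \<times> ('a \<times> 'a) set \<Rightarrow> nat" where
  "jt_cost J = (case J of (r, Ain, Aout) \<Rightarrow> card (Ain \<union> Aout))"

definition junction_solution ::
  "('a \<times> 'a) set \<Rightarrow> nat \<Rightarrow> (nat \<Rightarrow> 'a) \<Rightarrow> (nat \<Rightarrow> 'a) \<Rightarrow> (nat \<Rightarrow> nat)
     \<Rightarrow> ('a \<times> ('a \<times> 'a) set \<times> ('a \<times> 'a) set) list \<Rightarrow> bool" where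
  "junction_solution E k s t d Js \<longleftrightarrow> (\<forall>J \<in> set Js. junction_tree E J)
     \<and> (\<forall>i<k. \<exists>J \<in> set Js. jt_connects J (s i) (t i) (d i))"

text \<open>Cost counts edges with multiplicity over the junction trees.\<close>
definition solution_cost :: "('a \<times> ('a \<times> 'a) set \<times> ('a \<times> 'a) set) list \<Rightarrow> nat" where
  "solution_cost Js = (\<Sum>J\<leftarrow>Js. jt_cost J)"

definition spanner_feasible ::
  "('a \<times> 'a) set \<Rightarrow> nat \<Rightarrow> (nat \<Rightarrow> 'a) \<Rightarrow> (nat \<Rightarrow> 'a) \<Rightarrow> (nat \<Rightarrow> nat) \<Rightarrow> ('a \<times> 'a) set \<Rightarrow> bool" where
  "spanner_feasible E k s t d F \<longleftrightarrow> F \<subseteq> E \<and> (\<forall>i<k. walk_within F (d i) (s i) (t i))"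

definition OPT ::
  "('a \<times> 'a) set \<Rightarrow> nat \<Rightarrow> (nat \<Rightarrow> 'a) \<Rightarrow> (nat \<Rightarrow> 'a) \<Rightarrow> (nat \<Rightarrow> nat) \<Rightarrow> nat" where
  "OPT E k s t d = Min (card ` {F. spanner_feasible E k s t d F})"

end

theory Submission imports Defs begin

lemma relpow_conv: "((x,y) \<in> (R\<inverse>) ^^ n) = ((y,x) \<in> (R::('a\<times>'a) set) ^^ n)"
proof (induction n arbitrary: y)
  case 0 then show ?case by (auto elim: relpow_0_E)
next
  case (Suc n)
  show ?case
  proof
    assume "(x,y) \<in> (R\<inverse>) ^^ Suc n"
    then obtain z where "(x,z) \<in> (R\<inverse>) ^^ n" "(z,y) \<in> R\<inverse>" by (rule relpow_Suc_E)
    then have "(z,x) \<in> R ^^ n" "(y,z) \<in> R" using Suc by auto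
    then show "(y,x) \<in> R ^^ Suc n" using relpow_Suc_I2 by metis
  next
    assume "(y,x) \<in> R ^^ Suc n"
    then obtain z where "(y,z) \<in> R" "(z,x) \<in> R ^^ n" using relpow_Suc_D2 by metis
    then show "(x,y) \<in> (R\<inverse>) ^^ Suc n" using Suc by auto
  qed
qed

lemma relpow_mono': "(A::('a\<times>'a) set) \<subseteq> B \<Longrightarrow> (x,y) \<in> A ^^ n \<Longrightarrow> (x,y) \<in> B ^^ n"
proof (induction n arbitrary: y)
  case 0 then show ?case by (auto elim: relpow_0_E)
next
  case (Suc n) then show ?case by (meson relpow_Suc_E relpow_Suc_I subsetD)
qed

lemma relpow_ends: assumes that: "(x,y) \<in> (T::('a\<times>'a) set) ^^ m" shows "(x = y \<or> x \<in> fst ` T) \<and> (x = y \<or> y \<in> snd ` T)"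
proof (cases m)
  case 0 then show ?thesis using that by auto
next
  case (Suc n)
  have "(x = y \<or> x \<in> fst ` T)" using relpow_Suc_D2 that Suc by (metis fst_conv image_eqI)
  moreover have "(x = y \<or> y \<in> snd ` T)" using relpow_Suc_E that Suc by (metis snd_conv image_eqI)
  ultimately show ?thesis by blast
qed

lemma bfs:
  assumes fin: "finite F"
  shows "\<exists>T\<subseteq>F. out_arb r T \<and> (\<forall>v n. (r,v) \<in> F ^^ n \<longrightarrow> (\<exists>m\<le>n. (r,v) \<in> T ^^ m))"
proof -
  define reach where "reach v = (\<exists>n. (r,v) \<in> F ^^ n)" for v
  define dist where "dist v = (LEAST n. (r,v) \<in> F ^^ n)" for v
  define P where "P = {v. reach v \<and> v \<noteq> r}"
  define par where "par v = (SOME u. (u,v) \<in> F \<and> reach u \<and> dist u + 1 = dist v)" for v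
  define T where "T = (\<lambda>v. (par v, v)) ` P"
  have dist_in: "(r,v) \<in> F ^^ dist v" if "reach v" for v
    using that unfolding reach_def dist_def by (metis LeastI_ex)
  have dist_le: "dist v \<le> n" if "(r,v) \<in> F ^^ n" for v n
    using that unfolding dist_def by (rule Least_le)
  have dr: "dist r = 0" using dist_le[of r 0] by simp
  have key: "(par v,v) \<in> F \<and> reach (par v) \<and> dist (par v) + 1 = dist v" if "v \<in> P" for v
  proof -
    have rv: "reach v" "v \<noteq> r" using that P_def by auto
    have d: "(r,v) \<in> F ^^ dist v" using dist_in rv by blast
    have "dist v \<noteq> 0" using d rv by (metis relpow_0_E)
    then obtain m where m: "dist v = Suc m" by (cases "dist v") auto
    then obtain u where u: "(r,u) \<in> F ^^ m" "(u,v) \<in> F" using d by (metis relpow_Suc_E)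
    have "dist u \<le> m" using dist_le u by blast
    moreover have "\<not> dist u < m"
    proof
      assume "dist u < m"
      have "(r,v) \<in> F ^^ Suc (dist u)" using dist_in[of u] u unfolding reach_def
        by (meson relpow_Suc_I)
      then have "dist v \<le> Suc (dist u)" by (rule dist_le)
      with \<open>dist u < m\<close> m show False by simp
    qed
    ultimately have "(u,v) \<in> F \<and> reach u \<and> dist u + 1 = dist v" using u m unfolding reach_def by auto
    then show ?thesis unfolding par_def by (rule someI)
  qed
  have TF: "T \<subseteq> F" using key T_def by auto
  have Tedge: "(u,w) \<in> T \<longleftrightarrow> w \<in> P \<and> u = par w" for u w using T_def by auto
  have path: "\<forall>v. reach v \<and> dist v = n \<longrightarrow> (r,v) \<in> T ^^ n" for n
  proof (induction n)
    case 0 then show ?case using dist_in by (metis relpow_0_E relpow_0_I)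
  next
    case (Suc n)
    show ?case
    proof (intro allI impI)
      fix v assume v: "reach v \<and> dist v = Suc n"
      then have "v \<in> P" using dr P_def by auto
      then have "(par v, v) \<in> T" "reach (par v)" "dist (par v) = n" using key v Tedge by fastforce+
      then show "(r,v) \<in> T ^^ Suc n" using Suc by (metis relpow_Suc_I Suc_eq_plus1)
    qed
  qed
  have reachT: "(r,v) \<in> T ^^ dist v" if "reach v" for v using path that by blast
  have "out_arb r T"
    unfolding out_arb_def
  proof (intro conjI ballI impI allI)
    show "finite T" using TF fin finite_subset by blast
    show "(u, r) \<notin> T" for u using Tedge P_def by auto
    fix v assume v: "v \<in> arb_verts r T"
    have rv: "reach v"
    proof -
      have "v = r \<or> v \<in> fst ` T \<or> v \<in> snd ` T" using v unfolding arb_verts_def by blast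
      then show ?thesis
      proof (elim disjE)
        assume "v = r" then show ?thesis unfolding reach_def by (meson relpow_0_I)
      next
        assume "v \<in> fst ` T" then obtain w where "w \<in> P" "v = par w" using Tedge by force
        then show ?thesis using key by auto
      next
        assume "v \<in> snd ` T" then show ?thesis using Tedge P_def by force
      qed
    qed
    show "(r, v) \<in> T\<^sup>*" using reachT[OF rv] relpow_imp_rtrancl by blast
    assume "v \<noteq> r"
    then have "v \<in> P" using rv P_def by auto
    then show "\<exists>!u. (u, v) \<in> T" using Tedge by auto
  qed
  moreover have "\<forall>v n. (r,v) \<in> F ^^ n \<longrightarrow> (\<exists>m\<le>n. (r,v) \<in> T ^^ m)"
    using reachT dist_le reach_def by blast
  ultimately show ?thesis using TF by blast
qed

lemma bfs_in:
  assumes fin: "finite F"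
  shows "\<exists>T\<subseteq>F. in_arb r T \<and> (\<forall>v n. (v,r) \<in> F ^^ n \<longrightarrow> (\<exists>m\<le>n. (v,r) \<in> T ^^ m))"
proof -
  obtain T where T: "T \<subseteq> F\<inverse>" "out_arb r T" "\<forall>v n. (r,v) \<in> (F\<inverse>) ^^ n \<longrightarrow> (\<exists>m\<le>n. (r,v) \<in> T ^^ m)"
    using bfs[of "F\<inverse>" r] fin by auto
  have "T\<inverse> \<subseteq> F" using T by auto
  moreover have "in_arb r (T\<inverse>)" using T unfolding in_arb_def by simp
  moreover have "\<forall>v n. (v,r) \<in> F ^^ n \<longrightarrow> (\<exists>m\<le>n. (v,r) \<in> (T\<inverse>) ^^ m)"
    using T(3) relpow_conv by (metis converse_converse)
  ultimately show ?thesis by blast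
qed

lemma walk_edges:
  fixes F :: "('a\<times>'a) set"
  assumes "(s,t) \<in> F ^^ j"
  shows "\<exists>X. X \<subseteq> F \<and> finite X \<and> card X \<le> j \<and> (s,t) \<in> X ^^ j \<and>
     (\<forall>u w. (u,w) \<in> X \<longrightarrow> (\<exists>a b. a + b \<le> j \<and> (s,u) \<in> F ^^ a \<and> (u,t) \<in> F ^^ b))"
  using assms
proof (induction j arbitrary: t)
  case 0
  then have st: "s = t" by simp
  show ?case by (rule exI[of _ "{}"]) (simp add: st)
next
  case (Suc j)
  obtain m where m: "(s,m) \<in> F ^^ j" "(m,t) \<in> F" using Suc.prems by (rule relpow_Suc_E)
  obtain X where X: "X \<subseteq> F" "finite X" "card X \<le> j" "(s,m) \<in> X ^^ j"
     "\<forall>u w. (u,w) \<in> X \<longrightarrow> (\<exists>a b. a + b \<le> j \<and> (s,u) \<in> F ^^ a \<and> (u,m) \<in> F ^^ b)"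
    using Suc.IH[OF m(1)] by blast
  let ?Y = "insert (m,t) X"
  have "?Y \<subseteq> F" using X m by auto
  moreover have "finite ?Y" using X by auto
  moreover have "card ?Y \<le> Suc j" using X by (simp add: card_insert_if)
  moreover have "(s,t) \<in> ?Y ^^ Suc j"
  proof -
    have "(s,m) \<in> ?Y ^^ j" using relpow_mono'[of X ?Y] X by blast
    then show ?thesis by (meson insertI1 relpow_Suc_I)
  qed
  moreover have "\<forall>u w. (u,w) \<in> ?Y \<longrightarrow> (\<exists>a b. a + b \<le> Suc j \<and> (s,u) \<in> F ^^ a \<and> (u,t) \<in> F ^^ b)"
  proof (intro allI impI)
    fix u w assume uw: "(u,w) \<in> ?Y"
    show "\<exists>a b. a + b \<le> Suc j \<and> (s,u) \<in> F ^^ a \<and> (u,t) \<in> F ^^ b"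
    proof (cases "(u,w) = (m,t)")
      case True
      then have u: "u = m" by simp
      have "(m,t) \<in> F ^^ 1" using m by simp
      then have "j + 1 \<le> Suc j \<and> (s,u) \<in> F ^^ j \<and> (u,t) \<in> F ^^ 1" using m u by simp
      then show ?thesis by blast
    next
      case False
      then have "(u,w) \<in> X" using uw by auto
      then obtain a b where "a + b \<le> j" "(s,u) \<in> F ^^ a" "(u,m) \<in> F ^^ b" using X by blast
      then have "a + Suc b \<le> Suc j" "(s,u) \<in> F ^^ a" "(u,t) \<in> F ^^ Suc b" using m(2) relpow_Suc_I[of u m b F t] by simp_all
      then show ?thesis by blast
    qed
  qed
  ultimately show ?case by (intro exI[of _ ?Y]) simp
qed

lemma greedy:
  fixes \<theta> :: real and F :: "'e set" and c :: "'j \<Rightarrow> nat" and U :: "nat set"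
  assumes F: "finite F" and th: "\<theta> > 0"
    and Es: "\<And>i. i \<in> U \<Longrightarrow> Es i \<subseteq> F"
    and H: "\<And>e i. e \<in> F \<Longrightarrow> i \<in> U \<Longrightarrow> e \<in> Es i \<Longrightarrow> cov (H e) i"
    and Hc: "\<And>e. e \<in> F \<Longrightarrow> c (H e) \<le> card F"
    and L: "\<And>i. i \<in> U \<Longrightarrow> cov (L i) i"
    and Lc: "\<And>i. i \<in> U \<Longrightarrow> c (L i) \<le> card (Es i)"
  shows "finite I \<Longrightarrow> I \<subseteq> U \<Longrightarrow> \<exists>Js. set Js \<subseteq> H ` F \<union> L ` I \<and> (\<forall>i\<in>I. \<exists>J\<in>set Js. cov J i) \<and>
     real (sum_list (map c Js)) \<le> real (card F) * real (card I) / \<theta> + real (card F) * \<theta>"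
proof (induction "card I" arbitrary: I rule: less_induct)
  case less
  show ?case
  proof (cases "\<exists>e\<in>F. real (card {i\<in>I. e \<in> Es i}) \<ge> \<theta>")
    case True
    then obtain e where e: "e \<in> F" "real (card {i\<in>I. e \<in> Es i}) \<ge> \<theta>" by blast
    define J where "J = {i\<in>I. e \<in> Es i}"
    have finJ: "finite J" "J \<subseteq> I" using less.prems J_def by auto
    have "real (card J) > 0" using e th unfolding J_def by linarith
    then have cJ: "card J > 0" by simp
    have cle: "card J \<le> card I" using finJ less.prems card_mono by blast
    have cD: "card (I - J) = card I - card J" using finJ by (simp add: card_Diff_subset)
    have lt: "card (I - J) < card I" using cD cJ cle by linarith
    obtain Js where Js: "set Js \<subseteq> H ` F \<union> L ` (I - J)" "\<forall>i\<in>I - J. \<exists>J\<in>set Js. cov J i"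
      "real (sum_list (map c Js)) \<le> real (card F) * real (card (I - J)) / \<theta> + real (card F) * \<theta>"
      using less.hyps[OF lt] less.prems by blast
    let ?Js = "H e # Js"
    have "set ?Js \<subseteq> H ` F \<union> L ` I" using Js(1) e by auto
    moreover have "\<forall>i\<in>I. \<exists>J\<in>set ?Js. cov J i"
    proof
      fix i assume i: "i \<in> I"
      show "\<exists>J\<in>set ?Js. cov J i"
      proof (cases "e \<in> Es i")
        case True then show ?thesis using H e i less.prems by auto
      next
        case False then have "i \<in> I - J" using i J_def by auto
        then show ?thesis using Js(2) by auto
      qed
    qed
    moreover have "real (sum_list (map c ?Js)) \<le> real (card F) * real (card I) / \<theta> + real (card F) * \<theta>"
    proof -
      have a: "real (card F) \<le> real (card F) * real (card J) / \<theta>"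
        using e th unfolding J_def by (simp add: field_simps) (metis mult.commute mult_left_mono of_nat_0_le_iff)
      have b: "real (card (I - J)) = real (card I) - real (card J)" using cD cle by simp
      have "real (sum_list (map c ?Js)) = real (c (H e)) + real (sum_list (map c Js))" by simp
      also have "\<dots> \<le> real (card F) * real (card J) / \<theta> + (real (card F) * (real (card I) - real (card J)) / \<theta> + real (card F) * \<theta>)"
      proof -
        have hc: "real (c (H e)) \<le> real (card F)" using Hc[OF e(1)] by simp
        have j3: "real (sum_list (map c Js)) \<le> real (card F) * (real (card I) - real (card J)) / \<theta> + real (card F) * \<theta>"
          using Js(3) b by simp
        show ?thesis using hc j3 a by linarith
      qed
      also have "\<dots> = real (card F) * real (card I) / \<theta> + real (card F) * \<theta>"
        using th by (simp add: field_simps)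
      finally show ?thesis .
    qed
    ultimately show ?thesis by blast
  next
    case False
    then have small: "\<And>e. e \<in> F \<Longrightarrow> real (card {i\<in>I. e \<in> Es i}) < \<theta>" by (meson not_le)
    let ?Js = "map L (sorted_list_of_set I)"
    have "set ?Js \<subseteq> H ` F \<union> L ` I" using less.prems by auto
    moreover have "\<forall>i\<in>I. \<exists>J\<in>set ?Js. cov J i" using L less.prems by auto
    moreover have "real (sum_list (map c ?Js)) \<le> real (card F) * real (card I) / \<theta> + real (card F) * \<theta>"
    proof -
      have "sum_list (map c ?Js) = (\<Sum>i\<in>I. c (L i))"
        using less.prems by (simp add: sum_list_distinct_conv_sum_set)
      also have "\<dots> \<le> (\<Sum>i\<in>I. card (Es i))" using Lc less.prems by (meson subsetD sum_mono)
      also have "\<dots> = (\<Sum>i\<in>I. \<Sum>e\<in>F. if e \<in> Es i then 1 else 0)"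
      proof (rule sum.cong)
        fix i assume "i \<in> I"
        then have eq: "{e\<in>F. e \<in> Es i} = Es i" using Es less.prems by auto
        have "(\<Sum>e\<in>F. if e \<in> Es i then 1 else 0) = card {e\<in>F. e \<in> Es i}"
          using sum.inter_filter[OF F, of "\<lambda>_. 1::nat" "\<lambda>e. e \<in> Es i"] by simp
        then have "card (Es i) = (\<Sum>e\<in>F. if e \<in> Es i then 1 else 0)" using eq by simp
        then show "card (Es i) = (\<Sum>e\<in>F. if e \<in> Es i then 1 else 0)" .
      qed simp
      also have "\<dots> = (\<Sum>e\<in>F. \<Sum>i\<in>I. if e \<in> Es i then 1 else 0)" by (rule sum.swap)
      also have "\<dots> = (\<Sum>e\<in>F. card {i\<in>I. e \<in> Es i})"
      proof (rule sum.cong)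
        fix e assume "e \<in> F"
        show "(\<Sum>i\<in>I. if e \<in> Es i then 1 else 0) = card {i\<in>I. e \<in> Es i}"
          using sum.inter_filter[OF less.prems(1), of "\<lambda>_. 1::nat" "\<lambda>i. e \<in> Es i"] by simp
      qed simp
      finally have "real (sum_list (map c ?Js)) \<le> real (\<Sum>e\<in>F. card {i\<in>I. e \<in> Es i})"
        by (simp only: of_nat_le_iff)
      also have "\<dots> = (\<Sum>e\<in>F. real (card {i\<in>I. e \<in> Es i}))" by simp
      also have "\<dots> \<le> (\<Sum>e\<in>F. \<theta>)" using small by (meson less_imp_le sum_mono)
      also have "\<dots> = real (card F) * \<theta>" by simp
      finally have fin: "real (sum_list (map c ?Js)) \<le> real (card F) * \<theta>" .
      have "0 \<le> real (card F) * real (card I) / \<theta>" using th by simp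
      then show ?thesis using fin by linarith
    qed
    ultimately show ?thesis by blast
  qed
qed

lemma hub_tree:
  fixes F :: "('a\<times>'a) set"
  assumes fin: "finite F" and FE: "F \<subseteq> E"
  shows "\<exists>J. junction_tree E J \<and> jt_cost J \<le> card F \<and>
     (\<forall>x y d. (\<exists>a b. a + b \<le> d \<and> (x,u) \<in> F ^^ a \<and> (u,y) \<in> F ^^ b) \<longrightarrow> jt_connects J x y d)"
proof -
  obtain Ain where Ain: "Ain \<subseteq> F" "in_arb u Ain" "\<forall>v n. (v,u) \<in> F ^^ n \<longrightarrow> (\<exists>m\<le>n. (v,u) \<in> Ain ^^ m)"
    using bfs_in[OF fin] by blast
  obtain Aout where Aout: "Aout \<subseteq> F" "out_arb u Aout" "\<forall>v n. (u,v) \<in> F ^^ n \<longrightarrow> (\<exists>m\<le>n. (u,v) \<in> Aout ^^ m)"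
    using bfs[OF fin] by blast
  have "junction_tree E (u, Ain, Aout)" unfolding junction_tree_def using Ain Aout FE by auto
  moreover have "jt_cost (u, Ain, Aout) \<le> card F"
    unfolding jt_cost_def using Ain Aout fin by (simp add: card_mono)
  moreover have "jt_connects (u, Ain, Aout) x y d" if pre: "\<exists>a b. a + b \<le> d \<and> (x,u) \<in> F ^^ a \<and> (u,y) \<in> F ^^ b" for x y d
  proof -
    obtain a b where ab: "a + b \<le> d" "(x,u) \<in> F ^^ a" "(u,y) \<in> F ^^ b" using pre by blast
    obtain m1 where m1: "m1 \<le> a" "(x,u) \<in> Ain ^^ m1" using Ain(3) ab by blast
    obtain m2 where m2: "m2 \<le> b" "(u,y) \<in> Aout ^^ m2" using Aout(3) ab by blast
    have "x \<in> arb_verts u Ain" using relpow_ends[OF m1(2)] unfolding arb_verts_def by blast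
    moreover have "y \<in> arb_verts u Aout" using relpow_ends[OF m2(2)] unfolding arb_verts_def by blast
    moreover have "m1 + m2 \<le> d" using ab m1 m2 by linarith
    ultimately show ?thesis unfolding jt_connects_def using m1 m2 by auto
  qed
  ultimately show ?thesis by blast
qed

lemma leaf_tree:
  fixes X :: "('a\<times>'a) set"
  assumes fin: "finite X" and XE: "X \<subseteq> E" and j: "j \<le> d" "(x,y) \<in> X ^^ j"
  shows "\<exists>J. junction_tree E J \<and> jt_cost J \<le> card X \<and> jt_connects J x y d"
proof -
  obtain T where T: "T \<subseteq> X" "out_arb x T" "\<forall>v n. (x,v) \<in> X ^^ n \<longrightarrow> (\<exists>m\<le>n. (x,v) \<in> T ^^ m)"
    using bfs[OF fin] by blast
  have e: "in_arb x {}" unfolding in_arb_def out_arb_def arb_verts_def by simp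
  have "junction_tree E (x, {}, T)" unfolding junction_tree_def using T XE e by auto
  moreover have "jt_cost (x, {}, T) \<le> card X"
    unfolding jt_cost_def using T fin by (simp add: card_mono)
  moreover have "jt_connects (x, {}, T) x y d"
  proof -
    obtain m where m: "m \<le> j" "(x,y) \<in> T ^^ m" using T(3) j by blast
    have "y \<in> arb_verts x T" using relpow_ends[OF m(2)] unfolding arb_verts_def by blast
    moreover have "x \<in> arb_verts x {}" unfolding arb_verts_def by simp
    moreover have "0 + m \<le> d" "(x,x) \<in> ({}::('a\<times>'a) set) ^^ 0" using m j by simp_all
    ultimately show ?thesis unfolding jt_connects_def using m by blast
  qed
  ultimately show ?thesis by blast
qed

theorem lemma4p2:
  shows "\<exists>C>0. \<forall>(V :: nat set) E k s t d.
     finite V \<longrightarrow> E \<subseteq> V \<times> V \<longrightarrow>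
     (\<forall>i<k. s i \<in> V \<and> t i \<in> V \<and> walk_within E (d i) (s i) (t i)) \<longrightarrow>
     (\<exists>Js. junction_solution E k s t d Js \<and>
        real (solution_cost Js) \<le> C * sqrt (real k) * real (OPT E k s t d))"
proof (intro exI[of _ 2] conjI allI impI)
  show "(0::real) < 2" by simp
  fix V :: "nat set" and E :: "(nat \<times> nat) set" and k :: nat and s t d :: "nat \<Rightarrow> nat"
  assume V: "finite V" and EV: "E \<subseteq> V \<times> V"
    and pairs: "\<forall>i<k. s i \<in> V \<and> t i \<in> V \<and> walk_within E (d i) (s i) (t i)"
  show "\<exists>Js. junction_solution E k s t d Js \<and>
        real (solution_cost Js) \<le> 2 * sqrt (real k) * real (OPT E k s t d)"
  proof (cases "k = 0")
    case True
    then show ?thesis by (intro exI[of _ "[]"]) (simp add: junction_solution_def solution_cost_def)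
  next
    case False
    have finE: "finite E" using V EV by (meson finite_SigmaI finite_subset)
    define FS where "FS = {F. spanner_feasible E k s t d F}"
    have "FS \<subseteq> Pow E" unfolding FS_def spanner_feasible_def by auto
    then have finFS: "finite FS" using finE by (meson finite_Pow_iff finite_subset)
    have "E \<in> FS" unfolding FS_def spanner_feasible_def using pairs by auto
    then have "OPT E k s t d \<in> card ` FS" unfolding OPT_def FS_def[symmetric]
      using finFS by (intro Min_in) auto
    then obtain F where F: "F \<in> FS" "card F = OPT E k s t d" by auto
    have FE: "F \<subseteq> E" and Fw: "\<forall>i<k. walk_within F (d i) (s i) (t i)"
      using F(1) unfolding FS_def spanner_feasible_def by auto
    have finF: "finite F" using FE finE finite_subset by blast
    have "\<forall>i. \<exists>X. i < k \<longrightarrow> X \<subseteq> F \<and> finite X \<and> (\<exists>j\<le>d i. card X \<le> j \<and> (s i, t i) \<in> X ^^ j) \<and>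
        (\<forall>u w. (u,w) \<in> X \<longrightarrow> (\<exists>a b. a + b \<le> d i \<and> (s i,u) \<in> F ^^ a \<and> (u,t i) \<in> F ^^ b))"
    proof
      fix i
      show "\<exists>X. i < k \<longrightarrow> X \<subseteq> F \<and> finite X \<and> (\<exists>j\<le>d i. card X \<le> j \<and> (s i, t i) \<in> X ^^ j) \<and>
        (\<forall>u w. (u,w) \<in> X \<longrightarrow> (\<exists>a b. a + b \<le> d i \<and> (s i,u) \<in> F ^^ a \<and> (u,t i) \<in> F ^^ b))"
      proof (cases "i < k")
        case True
        then obtain j where j: "j \<le> d i" "(s i, t i) \<in> F ^^ j" using Fw unfolding walk_within_def by blast
        obtain X where X: "X \<subseteq> F" "finite X" "card X \<le> j" "(s i,t i) \<in> X ^^ j"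
          "\<forall>u w. (u,w) \<in> X \<longrightarrow> (\<exists>a b. a + b \<le> j \<and> (s i,u) \<in> F ^^ a \<and> (u,t i) \<in> F ^^ b)"
          using walk_edges[OF j(2)] by blast
        have "\<forall>u w. (u,w) \<in> X \<longrightarrow> (\<exists>a b. a + b \<le> d i \<and> (s i,u) \<in> F ^^ a \<and> (u,t i) \<in> F ^^ b)"
          using X(5) j(1) by (meson le_trans)
        then show ?thesis using X j by blast
      qed auto
    qed
    then obtain Es where Es: "\<And>i. i < k \<Longrightarrow> Es i \<subseteq> F \<and> finite (Es i) \<and> (\<exists>j\<le>d i. card (Es i) \<le> j \<and> (s i, t i) \<in> Es i ^^ j) \<and>
        (\<forall>u w. (u,w) \<in> Es i \<longrightarrow> (\<exists>a b. a + b \<le> d i \<and> (s i,u) \<in> F ^^ a \<and> (u,t i) \<in> F ^^ b))"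
      by (metis (no_types, lifting) choice)
    have "\<forall>e::nat\<times>nat. \<exists>J. junction_tree E J \<and> jt_cost J \<le> card F \<and>
       (\<forall>x y d. (\<exists>a b. a + b \<le> d \<and> (x,fst e) \<in> F ^^ a \<and> (fst e,y) \<in> F ^^ b) \<longrightarrow> jt_connects J x y d)"
      using hub_tree[OF finF FE] by blast
    then obtain H where H: "\<And>e::nat\<times>nat. junction_tree E (H e) \<and> jt_cost (H e) \<le> card F \<and>
       (\<forall>x y d. (\<exists>a b. a + b \<le> d \<and> (x,fst e) \<in> F ^^ a \<and> (fst e,y) \<in> F ^^ b) \<longrightarrow> jt_connects (H e) x y d)"
      by (metis (no_types, lifting) choice)
    have "\<forall>i. \<exists>J. i < k \<longrightarrow> junction_tree E J \<and> jt_cost J \<le> card (Es i) \<and> jt_connects J (s i) (t i) (d i)"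
    proof
      fix i
      show "\<exists>J. i < k \<longrightarrow> junction_tree E J \<and> jt_cost J \<le> card (Es i) \<and> jt_connects J (s i) (t i) (d i)"
      proof (cases "i < k")
        case True
        obtain j where j: "j \<le> d i" "(s i, t i) \<in> Es i ^^ j" using Es[OF True] by blast
        have "Es i \<subseteq> E" "finite (Es i)" using Es[OF True] FE by auto
        then show ?thesis using leaf_tree[OF _ _ j] by blast
      qed auto
    qed
    then obtain L where L: "\<And>i. i < k \<Longrightarrow> junction_tree E (L i) \<and> jt_cost (L i) \<le> card (Es i) \<and> jt_connects (L i) (s i) (t i) (d i)"
      by (metis (no_types, lifting) choice)
    have th: "sqrt (real k) > 0" using False by simp
    obtain Js where Js: "set Js \<subseteq> H ` F \<union> L ` {..<k}" "\<forall>i\<in>{..<k}. \<exists>J\<in>set Js. jt_connects J (s i) (t i) (d i)"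
      "real (sum_list (map jt_cost Js)) \<le> real (card F) * real (card {..<k}) / sqrt (real k) + real (card F) * sqrt (real k)"
    proof (rule exE[OF greedy[of F "sqrt (real k)" "{..<k}" Es "\<lambda>J i. jt_connects J (s i) (t i) (d i)" H jt_cost L "{..<k}"]])
      show "finite F" by (rule finF)
      show "0 < sqrt (real k)" by (rule th)
      show "\<And>i. i \<in> {..<k} \<Longrightarrow> Es i \<subseteq> F" using Es by blast
      show "\<And>e i. e \<in> F \<Longrightarrow> i \<in> {..<k} \<Longrightarrow> e \<in> Es i \<Longrightarrow> jt_connects (H e) (s i) (t i) (d i)"
      proof -
        fix e i assume "e \<in> F" "i \<in> {..<k}" "e \<in> Es i"
        then have "(fst e, snd e) \<in> Es i" "i < k" by auto
        then have "\<exists>a b. a + b \<le> d i \<and> (s i,fst e) \<in> F ^^ a \<and> (fst e,t i) \<in> F ^^ b" using Es by blast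
        then show "jt_connects (H e) (s i) (t i) (d i)" using H by blast
      qed
      show "\<And>e. e \<in> F \<Longrightarrow> jt_cost (H e) \<le> card F" using H by blast
      show "\<And>i. i \<in> {..<k} \<Longrightarrow> jt_connects (L i) (s i) (t i) (d i)" using L by blast
      show "\<And>i. i \<in> {..<k} \<Longrightarrow> jt_cost (L i) \<le> card (Es i)" using L by blast
      show "finite {..<k}" by simp
      show "{..<k} \<subseteq> {..<k}" by simp
    qed blast
    have "junction_solution E k s t d Js"
      unfolding junction_solution_def
    proof
      show "\<forall>J\<in>set Js. junction_tree E J" using Js(1) H L by blast
      show "\<forall>i<k. \<exists>J\<in>set Js. jt_connects J (s i) (t i) (d i)" using Js(2) by blast
    qed
    moreover have "real (solution_cost Js) \<le> 2 * sqrt (real k) * real (OPT E k s t d)"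
    proof -
      have sq: "real k / sqrt (real k) = sqrt (real k)"
        using th by (metis real_div_sqrt of_nat_0_le_iff)
      have "real (solution_cost Js) \<le> real (card F) * real k / sqrt (real k) + real (card F) * sqrt (real k)"
        using Js(3) unfolding solution_cost_def by simp
      also have "\<dots> = 2 * sqrt (real k) * real (card F)"
        using sq by (simp add: times_divide_eq_right[symmetric])
      finally show ?thesis using F(2) by simp
    qed
    ultimately show ?thesis by blast
  qed
qed

end
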